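(* For every $n\ge1$, the set $\mathfrak S_n(2413,4213)$ is invariant under the modified Foata--Strehl action: for every $\pi\in\mathfrak S_n(2413,4213)$ and every $S\subseteq[n]$, $\varphi'_S(\pi)\in\mathfrak S_n(2413,4213)$.
   Context: $\mathfrak S_n(2413,4213)$ is the set of permutations of $[n]$ with no subsequence order isomorphic to $2413$ or $4213$. For $\pi\in\mathfrak S_n$ use the convention $\pi_0=\pi_{n+1}=-\infty$; the value $x=\pi_i$ is a double ascent if $\pi_{i-1}<\pi_i<\pi_{i+1}$, a double descent if $\pi_{i-1}>\pi_i>\pi_{i+1}$, a peak if $\pi_{i-1}<\pi_i>\pi_{i+1}$, a valley if $\pi_{i-1}>\pi_i<\pi_{i+1}$. For $x\in[n]$, write $\pi=w_1w_2\,x\,w_3w_4$ where $w_2$ (resp. $w_3$) is the maximal (possibly empty) contiguous factor immediately to the left (resp. right) of $x$ all of whose letters exceed $x$, and set $\varphi_x(\pi)=w_1w_3\,x\,w_2w_4$. Define $\varphi'_x(\pi)=\varphi_x(\pi)$ if $x$ is a double ascent or double descent of $\pi$, and $\varphi'_x(\pi)=\pi$ otherwise (peak or valley). These are commuting involutions; for $S\subseteq[n]$, $\varphi'_S=\prod_{x\in S}\varphi'_x$. *)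

theory Defs
  imports Main "HOL-Combinatorics.Multiset_Permutations"
begin

text \<open>Permutations of [n] are represented in one-line notation as lists
  (element at position i, 0-based, is pi_(i+1)).\<close>

definition contains_pattern :: "nat list \<Rightarrow> nat list \<Rightarrow> bool" where
  "contains_pattern p sigma \<longleftrightarrow>
     (\<exists>idx. length idx = length sigma \<and> sorted_wrt (<) idx \<and>
        (\<forall>j \<in> set idx. j < length p) \<and>
        (\<forall>a < length sigma. \<forall>b < length sigma.
            (p ! (idx ! a) < p ! (idx ! b)) \<longleftrightarrow> (sigma ! a < sigma ! b)))"

definition Av_2413_4213 :: "nat \<Rightarrow> nat list set" where
  "Av_2413_4213 n = {p \<in> permutations_of_set {1..n}.
      \<not> contains_pattern p [2,4,1,3] \<and> \<not> contains_pattern p [4,2,1,3]}"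

definition pos :: "nat list \<Rightarrow> nat \<Rightarrow> nat" where
  "pos p x = length (takeWhile (\<lambda>y. y \<noteq> x) p)"

text \<open>Foata--Strehl map phi_x: p = w1 w2 x w3 w4 maps to w1 w3 x w2 w4, where w2 (w3)
  is the maximal factor immediately left (right) of x with all letters greater than x.\<close>
definition phi :: "nat \<Rightarrow> nat list \<Rightarrow> nat list" where
  "phi x p = (let i = pos p x;
                   L = take i p; R = drop (Suc i) p;
                   w2 = rev (takeWhile (\<lambda>y. x < y) (rev L));
                   w1 = take (length L - length w2) L;
                   w3 = takeWhile (\<lambda>y. x < y) R;
                   w4 = dropWhile (\<lambda>y. x < y) R
               in w1 @ w3 @ [x] @ w2 @ w4)"

text \<open>Double ascent / double descent with convention pi_0 = pi_(n+1) = -infinity.\<close>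
definition double_ascent :: "nat list \<Rightarrow> nat \<Rightarrow> bool" where
  "double_ascent p x = (let i = pos p x in
      (i = 0 \<or> p ! (i - 1) < x) \<and> (Suc i < length p \<and> x < p ! Suc i))"

definition double_descent :: "nat list \<Rightarrow> nat \<Rightarrow> bool" where
  "double_descent p x = (let i = pos p x in
      (i > 0 \<and> x < p ! (i - 1)) \<and> (Suc i \<ge> length p \<or> p ! Suc i < x))"

definition phi' :: "nat \<Rightarrow> nat list \<Rightarrow> nat list" where
  "phi' x p = (if double_ascent p x \<or> double_descent p x then phi x p else p)"

text \<open>phi'_S = product (composition) of phi'_x over x in S, applied in increasing order
  of x (the phi'_x commute, so the order is immaterial).\<close>
definition phi'_set :: "nat set \<Rightarrow> nat list \<Rightarrow> nat list" where
  "phi'_set S p = fold phi' (sorted_list_of_set S) p"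

end

theory Submission
  imports Defs
begin


lemma pos_Cons: "pos (y#ys) u = (if y = u then 0 else Suc (pos ys u))"
  by (simp add: pos_def)

lemma pos_append: "pos (xs@ys) u = (if u \<in> set xs then pos xs u else length xs + pos ys u)"
  by (induction xs) (auto simp: pos_Cons)

lemma pos_nth: "u \<in> set L \<Longrightarrow> pos L u < length L \<and> L ! pos L u = u"
  by (induction L) (auto simp: pos_Cons)

lemma pos_of_nth: "distinct L \<Longrightarrow> i < length L \<Longrightarrow> pos L (L!i) = i"
proof (induction L arbitrary: i)
  case (Cons a L) then show ?case by (cases i) (auto simp: pos_Cons)
qed simp

definition cnd :: "nat \<Rightarrow> nat \<Rightarrow> nat \<Rightarrow> nat \<Rightarrow> bool" where
  "cnd a b c d \<longleftrightarrow> c < d \<and> ((c < a \<and> a < d \<and> d < b) \<or> (c < b \<and> b < d \<and> d < a))"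

definition bad :: "nat list \<Rightarrow> bool" where
  "bad L \<longleftrightarrow> (\<exists>a b c d. a \<in> set L \<and> b \<in> set L \<and> c \<in> set L \<and> d \<in> set L \<and>
     pos L a < pos L b \<and> pos L b < pos L c \<and> pos L c < pos L d \<and> cnd a b c d)"

lemma all4: "(\<forall>i<(4::nat). P i) \<longleftrightarrow> P 0 \<and> P 1 \<and> P 2 \<and> P 3"
  by (auto simp: numeral_eq_Suc less_Suc_eq)

lemma contains_bad:
  assumes "distinct L" "contains_pattern L [2,4,1,3] \<or> contains_pattern L [4,2,1,3]"
  shows "bad L"
proof -
  from assms(2) obtain sg :: "nat list" where sg: "sg = [2,4,1,3] \<or> sg = [4,2,1,3]"
    and cp: "contains_pattern L sg" by blast
  have lsg: "length sg = 4" using sg by auto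
  from cp obtain idx where
    idx: "length idx = 4" "sorted_wrt (<) idx" "\<forall>j \<in> set idx. j < length L"
     "\<forall>a < 4. \<forall>b < 4. (L ! (idx ! a) < L ! (idx ! b)) \<longleftrightarrow> (sg ! a < sg ! b)"
    unfolding contains_pattern_def lsg by blast
  have o: "idx!0 < idx!1" "idx!1 < idx!2" "idx!2 < idx!3"
    using idx(1,2) by (auto simp: sorted_wrt_iff_nth_less)
  have l: "idx!i < length L" if "i < 4" for i using idx(1,3) that by auto
  have p: "pos L (L!(idx!i)) = idx!i" if "i<4" for i using pos_of_nth[OF assms(1) l[OF that]] .
  have m: "L!(idx!i) \<in> set L" if "i<4" for i using l[OF that] by simp
  have q: "(L ! (idx ! a) < L ! (idx ! b)) \<longleftrightarrow> (sg ! a < sg ! b)" if "a<4" "b<4" for a b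
    using idx(4) that by blast
  have c: "cnd (L!(idx!0)) (L!(idx!1)) (L!(idx!2)) (L!(idx!3))"
    using sg
  proof
    assume "sg = [2,4,1,3]"
    then show ?thesis using q[of 2 0] q[of 0 3] q[of 3 1] q[of 2 3] unfolding cnd_def by simp
  next
    assume "sg = [4,2,1,3]"
    then show ?thesis using q[of 2 1] q[of 1 3] q[of 3 0] q[of 2 3] unfolding cnd_def by simp
  qed
  show ?thesis unfolding bad_def
    apply (rule exI[of _ "L!(idx!0)"], rule exI[of _ "L!(idx!1)"], rule exI[of _ "L!(idx!2)"], rule exI[of _ "L!(idx!3)"])
    using c o m p by simp
qed

lemma four_cases: "(a::nat) < 4 \<Longrightarrow> a = 0 \<or> a = 1 \<or> a = 2 \<or> a = 3" by auto

lemma pat_ok: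
  assumes "L ! i0 = v0" "L ! i1 = v1" "L ! i2 = v2" "L ! i3 = v3"
    and "\<And>a b. a < 4 \<Longrightarrow> b < 4 \<Longrightarrow> ([v0,v1,v2,v3] ! a < [v0,v1,v2,v3] ! b) \<longleftrightarrow> ((sg::nat list) ! a < sg ! b)"
  shows "\<forall>a < 4. \<forall>b < 4. (L ! ([i0,i1,i2,i3] ! a) < L ! ([i0,i1,i2,i3] ! b)) \<longleftrightarrow> (sg ! a < sg ! b)"
proof (intro allI impI)
  fix a b :: nat assume ab: "a < 4" "b < 4"
  have "L ! ([i0,i1,i2,i3] ! a) = [v0,v1,v2,v3] ! a" using four_cases[OF ab(1)] assms(1-4) by auto
  moreover have "L ! ([i0,i1,i2,i3] ! b) = [v0,v1,v2,v3] ! b" using four_cases[OF ab(2)] assms(1-4) by auto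
  ultimately show "(L ! ([i0,i1,i2,i3] ! a) < L ! ([i0,i1,i2,i3] ! b)) \<longleftrightarrow> (sg ! a < sg ! b)"
    using assms(5)[OF ab] by simp
qed

lemma cmp_ok:
  fixes a b c d :: nat
  assumes "c < a" "a < d" "d < b"
  shows "\<And>i j. i < 4 \<Longrightarrow> j < 4 \<Longrightarrow> ([a,b,c,d] ! i < [a,b,c,d] ! j) \<longleftrightarrow> ([2,4,1,3::nat] ! i < [2,4,1,3] ! j)"
    and "\<And>i j. i < 4 \<Longrightarrow> j < 4 \<Longrightarrow> ([b,a,c,d] ! i < [b,a,c,d] ! j) \<longleftrightarrow> ([4,2,1,3::nat] ! i < [4,2,1,3] ! j)"
proof -
  fix i j :: nat assume ij: "i < 4" "j < 4"
  show "([a,b,c,d] ! i < [a,b,c,d] ! j) \<longleftrightarrow> ([2,4,1,3::nat] ! i < [2,4,1,3] ! j)"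
    using four_cases[OF ij(1)] four_cases[OF ij(2)] assms by (elim disjE) simp_all
next
  fix i j :: nat assume ij: "i < 4" "j < 4"
  show "([b,a,c,d] ! i < [b,a,c,d] ! j) \<longleftrightarrow> ([4,2,1,3::nat] ! i < [4,2,1,3] ! j)"
    using four_cases[OF ij(1)] four_cases[OF ij(2)] assms by (elim disjE) simp_all
qed

lemma bad_contains:
  assumes "bad L"
  shows "contains_pattern L [2,4,1,3] \<or> contains_pattern L [4,2,1,3]"
proof -
  obtain a b c d where h: "a \<in> set L" "b \<in> set L" "c \<in> set L" "d \<in> set L"
     "pos L a < pos L b" "pos L b < pos L c" "pos L c < pos L d" "cnd a b c d"
    using assms unfolding bad_def by blast
  let ?idx = "[pos L a, pos L b, pos L c, pos L d]"
  have n: "L ! pos L a = a" "L ! pos L b = b" "L ! pos L c = c" "L ! pos L d = d"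
    "pos L a < length L" "pos L b < length L" "pos L c < length L" "pos L d < length L"
    using pos_nth h(1-4) by auto
  have s: "sorted_wrt (<) ?idx" using h(5-7) by auto
  have st: "\<forall>j\<in>set ?idx. j < length L" using n by simp
  show ?thesis
  proof (cases "c < a \<and> a < d \<and> d < b")
    case True
    have cm: "\<And>i j. i < 4 \<Longrightarrow> j < 4 \<Longrightarrow> ([a,b,c,d] ! i < [a,b,c,d] ! j) \<longleftrightarrow> ([2,4,1,3::nat] ! i < [2,4,1,3] ! j)"
      using cmp_ok(1)[of c a d b] True by blast
    have "contains_pattern L [2,4,1,3]" unfolding contains_pattern_def
      apply (rule exI[of _ ?idx])
      using s st pat_ok[OF n(1-4) cm] by simp
    then show ?thesis ..
  next
    case False
    have T: "c < b \<and> b < d \<and> d < a" using h(8) False unfolding cnd_def by auto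
    have cm: "\<And>i j. i < 4 \<Longrightarrow> j < 4 \<Longrightarrow> ([a,b,c,d] ! i < [a,b,c,d] ! j) \<longleftrightarrow> ([4,2,1,3::nat] ! i < [4,2,1,3] ! j)"
      using cmp_ok(2)[of c b d a] T by blast
    have "contains_pattern L [4,2,1,3]" unfolding contains_pattern_def
      apply (rule exI[of _ ?idx])
      using s st pat_ok[OF n(1-4) cm] by simp
    then show ?thesis ..
  qed
qed

lemma av_iff: "p \<in> Av_2413_4213 n \<longleftrightarrow> set p = {1..n} \<and> distinct p \<and> \<not> bad p"
  unfolding Av_2413_4213_def permutations_of_set_def using contains_bad bad_contains by blast



lemma pos1:
  assumes "distinct (A @ x # B @ C)"
  shows "pos (A @ x # B @ C) u = (if u \<in> set A then pos A u else if u = x then length A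
     else if u \<in> set B then Suc (length A + pos B u) else Suc (length A + length B + pos C u))"
  using assms by (auto simp: pos_append pos_Cons)

lemma pos2:
  assumes "distinct (A @ x # B @ C)"
  shows "pos (A @ B @ x # C) u = (if u \<in> set A then pos A u else if u \<in> set B then length A + pos B u
     else if u = x then length A + length B else Suc (length A + length B + pos C u))"
  using assms by (auto simp: pos_append pos_Cons)

lemma posl: "u \<in> set L \<Longrightarrow> pos L u < length L" using pos_nth by blast

lemma cnd_sym: "cnd a b c d \<Longrightarrow> cnd b a c d" unfolding cnd_def by auto

lemma swap1:
  assumes dist: "distinct (A @ x # B @ C)" and Bx: "\<forall>b\<in>set B. x < b"
    and hC: "C \<noteq> [] \<longrightarrow> hd C < x" and bd: "bad (A @ B @ x # C)"
  shows "bad (A @ x # B @ C)"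
proof -
  define P1 where "P1 = A @ x # B @ C"
  define P2 where "P2 = A @ B @ x # C"
  have st: "set P2 = set P1" unfolding P1_def P2_def by auto
  have dj: "x \<notin> set A" "x \<notin> set B" "x \<notin> set C" "set A \<inter> set B = {}" "set A \<inter> set C = {}"
     "set B \<inter> set C = {}" using dist by auto
  have p1: "\<And>u. pos P1 u = (if u \<in> set A then pos A u else if u = x then length A
     else if u \<in> set B then Suc (length A + pos B u) else Suc (length A + length B + pos C u))"
    unfolding P1_def using pos1[OF dist] .
  have p2: "\<And>u. pos P2 u = (if u \<in> set A then pos A u else if u \<in> set B then length A + pos B u
     else if u = x then length A + length B else Suc (length A + length B + pos C u))"
    unfolding P2_def using pos2[OF dist] .
  have mem: "u \<in> set P1 \<longleftrightarrow> u \<in> set A \<or> u = x \<or> u \<in> set B \<or> u \<in> set C" for u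
    unfolding P1_def by auto
  have pres: "pos P1 u < pos P1 v \<longleftrightarrow> pos P2 u < pos P2 v"
    if "u \<in> set P1" "v \<in> set P1" "\<not> (u = x \<and> v \<in> set B)" "\<not> (v = x \<and> u \<in> set B)" for u v
    using that dj posl[of u A] posl[of v A] posl[of u B] posl[of v B] unfolding p1 p2 mem
    by (auto split: if_splits)
  have afterx: "u \<in> set C" if "u \<in> set P1" "pos P2 x < pos P2 u" for u
    using that dj posl[of u A] posl[of u B] unfolding p2 mem by (auto split: if_splits)
  have beforex: "u \<in> set A \<or> u \<in> set B" if "u \<in> set P1" "pos P2 u < pos P2 x" for u
    using that dj unfolding p2 mem by (auto split: if_splits)
  have beforeA: "u \<in> set A" if "u \<in> set P1" "c \<in> set A" "pos P2 u < pos P2 c" for u c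
    using that dj posl[of c A] unfolding p2 mem by (auto split: if_splits)
  obtain a b c d where h: "a \<in> set P1" "b \<in> set P1" "c \<in> set P1" "d \<in> set P1"
     "pos P2 a < pos P2 b" "pos P2 b < pos P2 c" "pos P2 c < pos P2 d" and cn: "cnd a b c d"
    using bd st unfolding bad_def P2_def[symmetric] by metis
  have goal: "bad P1" if "a' \<in> set P1" "b' \<in> set P1" "c' \<in> set P1" "d' \<in> set P1"
     "pos P1 a' < pos P1 b'" "pos P1 b' < pos P1 c'" "pos P1 c' < pos P1 d'" "cnd a' b' c' d'"
    for a' b' c' d' using that unfolding bad_def by blast
  have ne: "a \<noteq> b" "b \<noteq> c" "c \<noteq> d" "a \<noteq> c" "a \<noteq> d" "b \<noteq> d" using h(5-7) by auto
  consider "x \<notin> {a,b,c,d}" | "x = a" | "x = b" | "x = c" | "x = d" by auto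
  then have "bad P1"
  proof cases
    case 1
    have "pos P1 a < pos P1 b" using pres[OF h(1,2)] h(5) 1 by auto
    moreover have "pos P1 b < pos P1 c" using pres[OF h(2,3)] h(6) 1 by auto
    moreover have "pos P1 c < pos P1 d" using pres[OF h(3,4)] h(7) 1 by auto
    ultimately show ?thesis using goal[OF h(1-4) _ _ _ cn] by auto
  next
    case 2
    have C: "b \<in> set C" "c \<in> set C" "d \<in> set C" using afterx h 2 by auto
    have "pos P1 a < pos P1 b" using pres[OF h(1,2)] h(5) C dj by auto
    moreover have "pos P1 b < pos P1 c" using pres[OF h(2,3)] h(6) C dj by auto
    moreover have "pos P1 c < pos P1 d" using pres[OF h(3,4)] h(7) C dj by auto
    ultimately show ?thesis using goal[OF h(1-4) _ _ _ cn] by auto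
  next
    case 3
    have C: "c \<in> set C" "d \<in> set C" using afterx h 3 by auto
    show ?thesis
    proof (cases "a \<in> set B")
      case False
      have "pos P1 a < pos P1 b" using pres[OF h(1,2)] h(5) C dj False 3 by auto
      moreover have "pos P1 b < pos P1 c" using pres[OF h(2,3)] h(6) C dj by auto
      moreover have "pos P1 c < pos P1 d" using pres[OF h(3,4)] h(7) C dj by auto
      ultimately show ?thesis using goal[OF h(1-4) _ _ _ cn] by auto
    next
      case True
      have "pos P1 x < pos P1 a" using True dj unfolding p1 by auto
      moreover have "pos P1 a < pos P1 c" using True C dj posl[of a B] unfolding p1 by auto
      moreover have "pos P1 c < pos P1 d" using pres[OF h(3,4)] h(7) C dj by auto
      ultimately show ?thesis using goal[OF h(2) h(1) h(3-4) _ _ _ cnd_sym[OF cn]] 3 by auto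
    qed
  next
    case 4
    have D: "d \<in> set C" using afterx h 4 by auto
    have AB: "a \<in> set A \<or> a \<in> set B" "b \<in> set A \<or> b \<in> set B" using beforex h 4 by auto
    show ?thesis
    proof (cases "a \<in> set B \<or> b \<in> set B")
      case False
      have "pos P1 a < pos P1 b" using pres[OF h(1,2)] h(5) ne dj False 4 by auto
      moreover have "pos P1 b < pos P1 c" using pres[OF h(2,3)] h(6) False ne 4 by auto
      moreover have "pos P1 c < pos P1 d" using pres[OF h(3,4)] h(7) D dj by auto
      ultimately show ?thesis using goal[OF h(1-4) _ _ _ cn] by auto
    next
      case True
      then have "C \<noteq> []" using D by auto
      define z where "z = hd C"
      have zC: "z \<in> set C" "z < x" using \<open>C \<noteq> []\<close> hC unfolding z_def by auto
      have "d \<noteq> z" using cn 4 zC unfolding cnd_def by auto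
      then have "pos C z < pos C d" using D \<open>C \<noteq> []\<close> pos_nth[of d C] unfolding z_def
        by (cases C) (auto simp: pos_Cons)
      then have zd: "pos P1 z < pos P1 d" using zC D dj unfolding p1 by auto
      have bz: "pos P1 b < pos P1 z" using AB zC dj posl[of b A] posl[of b B] unfolding p1 by auto
      have ab: "pos P1 a < pos P1 b" using pres[OF h(1,2)] h(5) AB 4 ne dj by auto
      have "cnd a b z d" using cn zC 4 unfolding cnd_def by auto
      then show ?thesis using goal[OF h(1,2) _ h(4) ab bz zd] zC mem by auto
    qed
  next
    case 5
    have "c \<notin> set B" using cn 5 Bx unfolding cnd_def by auto
    then have cA: "c \<in> set A" using beforex h 5 by auto
    have aA: "a \<in> set A" using beforeA[OF h(1) cA] h(5,6) by linarith
    have bA: "b \<in> set A" using beforeA[OF h(2) cA h(6)] .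
    have "pos P1 a < pos P1 b" using pres[OF h(1,2)] h(5) aA bA dj by auto
    moreover have "pos P1 b < pos P1 c" using pres[OF h(2,3)] h(6) cA bA dj by auto
    moreover have "pos P1 c < pos P1 d" using pres[OF h(3,4)] h(7) cA 5 dj by auto
    ultimately show ?thesis using goal[OF h(1-4) _ _ _ cn] by auto
  qed
  then show ?thesis unfolding P1_def .
qed


lemma swap2:
  assumes dist: "distinct (A @ x # B @ C)" and Bx: "\<forall>b\<in>set B. x < b"
    and lA: "A \<noteq> [] \<longrightarrow> last A < x" and bd: "bad (A @ x # B @ C)"
  shows "bad (A @ B @ x # C)"
proof -
  define P1 where "P1 = A @ x # B @ C"
  define P2 where "P2 = A @ B @ x # C"
  have st: "set P2 = set P1" unfolding P1_def P2_def by auto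
  have dj: "x \<notin> set A" "x \<notin> set B" "x \<notin> set C" "set A \<inter> set B = {}" "set A \<inter> set C = {}"
     "set B \<inter> set C = {}" using dist by auto
  have p1: "\<And>u. pos P1 u = (if u \<in> set A then pos A u else if u = x then length A
     else if u \<in> set B then Suc (length A + pos B u) else Suc (length A + length B + pos C u))"
    unfolding P1_def using pos1[OF dist] .
  have p2: "\<And>u. pos P2 u = (if u \<in> set A then pos A u else if u \<in> set B then length A + pos B u
     else if u = x then length A + length B else Suc (length A + length B + pos C u))"
    unfolding P2_def using pos2[OF dist] .
  have mem: "u \<in> set P1 \<longleftrightarrow> u \<in> set A \<or> u = x \<or> u \<in> set B \<or> u \<in> set C" for u
    unfolding P1_def by auto
  have pres: "pos P1 u < pos P1 v \<longleftrightarrow> pos P2 u < pos P2 v"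
    if "u \<in> set P1" "v \<in> set P1" "\<not> (u = x \<and> v \<in> set B)" "\<not> (v = x \<and> u \<in> set B)" for u v
    using that dj posl[of u A] posl[of v A] posl[of u B] posl[of v B] unfolding p1 p2 mem
    by (auto split: if_splits)
  have afterx: "u \<in> set B \<or> u \<in> set C" if "u \<in> set P1" "pos P1 x < pos P1 u" for u
    using that dj posl[of u A] unfolding p1 mem by (auto split: if_splits)
  have beforex: "u \<in> set A" if "u \<in> set P1" "pos P1 u < pos P1 x" for u
    using that dj posl[of u A] unfolding p1 mem by (auto split: if_splits)
  have afterC: "u \<in> set C" if "u \<in> set P1" "c \<in> set C" "pos P1 c < pos P1 u" for u c
    using that dj posl[of u A] posl[of u B] unfolding p1 mem by (auto split: if_splits)
  obtain a b c d where h: "a \<in> set P1" "b \<in> set P1" "c \<in> set P1" "d \<in> set P1"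
     "pos P1 a < pos P1 b" "pos P1 b < pos P1 c" "pos P1 c < pos P1 d" and cn: "cnd a b c d"
    using bd unfolding bad_def P1_def[symmetric] by metis
  have goal: "bad P2" if "a' \<in> set P1" "b' \<in> set P1" "c' \<in> set P1" "d' \<in> set P1"
     "pos P2 a' < pos P2 b'" "pos P2 b' < pos P2 c'" "pos P2 c' < pos P2 d'" "cnd a' b' c' d'"
    for a' b' c' d' using that st unfolding bad_def by blast
  have ne: "a \<noteq> b" "b \<noteq> c" "c \<noteq> d" "a \<noteq> c" "a \<noteq> d" "b \<noteq> d" using h(5-7) by auto
  consider "x \<notin> {a,b,c,d}" | "x = a" | "x = b" | "x = c" | "x = d" by auto
  then have "bad P2"
  proof cases
    case 1
    have "pos P2 a < pos P2 b" using pres[OF h(1,2)] h(5) 1 by auto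
    moreover have "pos P2 b < pos P2 c" using pres[OF h(2,3)] h(6) 1 by auto
    moreover have "pos P2 c < pos P2 d" using pres[OF h(3,4)] h(7) 1 by auto
    ultimately show ?thesis using goal[OF h(1-4) _ _ _ cn] by auto
  next
    case 2
    have "c \<notin> set B" using cn 2 Bx unfolding cnd_def by auto
    then have cC: "c \<in> set C" using afterx[OF h(3)] h(5,6) 2 by auto
    have dC: "d \<in> set C" using afterC[OF h(4) cC h(7)] .
    have bBC: "b \<in> set B \<or> b \<in> set C" using afterx[OF h(2)] h(5) 2 by auto
    show ?thesis
    proof (cases "b \<in> set B")
      case True
      have "pos P2 b < pos P2 x" using True dj posl[of b B] unfolding p2 by auto
      moreover have "pos P2 x < pos P2 c" using cC dj unfolding p2 by auto
      moreover have "pos P2 c < pos P2 d" using pres[OF h(3,4)] h(7) cC dC dj by auto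
      ultimately show ?thesis using goal[OF h(2) h(1) h(3-4) _ _ _ cnd_sym[OF cn]] 2 by auto
    next
      case False
      then have bC: "b \<in> set C" using bBC by auto
      have "pos P2 a < pos P2 b" using pres[OF h(1,2)] h(5) bC dj by auto
      moreover have "pos P2 b < pos P2 c" using pres[OF h(2,3)] h(6) bC cC dj by auto
      moreover have "pos P2 c < pos P2 d" using pres[OF h(3,4)] h(7) cC dC dj by auto
      ultimately show ?thesis using goal[OF h(1-4) _ _ _ cn] by auto
    qed
  next
    case 3
    have aA: "a \<in> set A" using beforex[OF h(1)] h(5) 3 by auto
    have "c \<notin> set B" using cn 3 Bx unfolding cnd_def by auto
    then have cC: "c \<in> set C" using afterx[OF h(3)] h(6) 3 by auto
    have dC: "d \<in> set C" using afterC[OF h(4) cC h(7)] .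
    have "pos P2 a < pos P2 b" using pres[OF h(1,2)] h(5) aA dj by auto
    moreover have "pos P2 b < pos P2 c" using pres[OF h(2,3)] h(6) cC dj by auto
    moreover have "pos P2 c < pos P2 d" using pres[OF h(3,4)] h(7) cC dC dj by auto
    ultimately show ?thesis using goal[OF h(1-4) _ _ _ cn] by auto
  next
    case 4
    have aA: "a \<in> set A" using beforex[OF h(1)] h(5,6) 4 by auto
    have bA: "b \<in> set A" using beforex[OF h(2)] h(6) 4 by auto
    have dBC: "d \<in> set B \<or> d \<in> set C" using afterx[OF h(4)] h(7) 4 by auto
    have ab: "pos P2 a < pos P2 b" using pres[OF h(1,2)] h(5) aA bA dj by auto
    show ?thesis
    proof (cases "d \<in> set B")
      case False
      then have dC: "d \<in> set C" using dBC by auto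
      have "pos P2 b < pos P2 c" using pres[OF h(2,3)] h(6) bA dj by auto
      moreover have "pos P2 c < pos P2 d" using pres[OF h(3,4)] h(7) dC dj by auto
      ultimately show ?thesis using goal[OF h(1-4) ab _ _ cn] by auto
    next
      case True
      have An: "A \<noteq> []" using aA by auto
      define y where "y = last A"
      have yA: "y \<in> set A" "y < x" using An lA unfolding y_def by auto
      have dA: "distinct A" using dist by auto
      have py: "pos A y = length A - 1" unfolding y_def using An pos_of_nth[OF dA, of "length A - 1"]
        by (simp add: last_conv_nth)
      have "b \<noteq> y" using cn 4 yA unfolding cnd_def by auto
      moreover have "pos A b < length A" "A ! pos A b = b" using pos_nth[OF bA] by auto
      ultimately have "pos A b \<noteq> length A - 1" using An unfolding y_def by (metis last_conv_nth)
      then have "pos A b < pos A y" using py \<open>pos A b < length A\<close> by linarith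
      then have by': "pos P2 b < pos P2 y" using bA yA unfolding p2 by auto
      have yd: "pos P2 y < pos P2 d" using yA True posl[of y A] dj unfolding p2 by auto
      have "cnd a b y d" using cn yA 4 unfolding cnd_def by auto
      then show ?thesis using goal[OF h(1,2) _ h(4) ab by' yd] yA mem by auto
    qed
  next
    case 5
    have aA: "a \<in> set A" using beforex[OF h(1)] h(5,6,7) 5 by auto
    have bA: "b \<in> set A" using beforex[OF h(2)] h(6,7) 5 by auto
    have cA: "c \<in> set A" using beforex[OF h(3)] h(7) 5 by auto
    have "pos P2 a < pos P2 b" using pres[OF h(1,2)] h(5) aA bA dj by auto
    moreover have "pos P2 b < pos P2 c" using pres[OF h(2,3)] h(6) cA bA dj by auto
    moreover have "pos P2 c < pos P2 d" using pres[OF h(3,4)] h(7) cA 5 dj by auto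
    ultimately show ?thesis using goal[OF h(1-4) _ _ _ cn] by auto
  qed
  then show ?thesis unfolding P2_def .
qed



lemma phi_split:
  assumes "x \<notin> set L"
  shows "phi x (L @ x # R) = (let w2 = rev (takeWhile (\<lambda>y. x < y) (rev L));
                   w1 = take (length L - length w2) L;
                   w3 = takeWhile (\<lambda>y. x < y) R;
                   w4 = dropWhile (\<lambda>y. x < y) R
               in w1 @ w3 @ [x] @ w2 @ w4)"
proof -
  have "pos (L @ x # R) x = length L" using assms by (simp add: pos_append pos_Cons)
  then show ?thesis unfolding phi_def by (simp add: Let_def)
qed

lemma phi_DA:
  assumes "x \<notin> set L" "L = [] \<or> last L < x"
  shows "phi x (L @ x # R) = L @ takeWhile (\<lambda>y. x < y) R @ x # dropWhile (\<lambda>y. x < y) R"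
proof -
  have "takeWhile (\<lambda>y. x < y) (rev L) = []" using assms(2)
    by (cases "rev L") (auto simp flip: last_rev)
  then show ?thesis using phi_split[OF assms(1)] by (simp add: Let_def)
qed

lemma phi_DD:
  assumes "x \<notin> set L" "R = [] \<or> hd R < x"
  shows "phi x (L @ x # R) = rev (dropWhile (\<lambda>y. x < y) (rev L)) @ x # rev (takeWhile (\<lambda>y. x < y) (rev L)) @ R"
proof -
  have t: "takeWhile (\<lambda>y. x < y) R = []" "dropWhile (\<lambda>y. x < y) R = R" using assms(2)
    by (cases R; auto)+
  define T where "T = takeWhile (\<lambda>y. x < y) (rev L)"
  define D where "D = dropWhile (\<lambda>y. x < y) (rev L)"
  have "rev L = T @ D" unfolding T_def D_def by simp
  then have L: "L = rev D @ rev T" by (metis rev_append rev_rev_ident)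
  have "take (length L - length (rev T)) L = rev D" using L by simp
  then show ?thesis using phi_split[OF assms(1)] t unfolding T_def[symmetric] D_def[symmetric]
    by (simp add: Let_def)
qed

lemma phi'_pres:
  assumes p: "p \<in> Av_2413_4213 n" and x: "x \<in> {1..n}"
  shows "phi' x p \<in> Av_2413_4213 n"
proof -
  have sp: "set p = {1..n}" and dp: "distinct p" and nb: "\<not> bad p" using p av_iff by auto
  then have "x \<in> set p" using x by auto
  then obtain L R where pLR: "p = L @ x # R" by (meson split_list)
  have xL: "x \<notin> set L" "x \<notin> set R" using dp pLR by auto
  have ip: "pos p x = length L" using pLR xL by (simp add: pos_append pos_Cons)
  have lastL: "L \<noteq> [] \<Longrightarrow> p ! (pos p x - 1) = last L"
    by (subst ip) (simp add: pLR nth_append last_conv_nth)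
  have hdR: "Suc (pos p x) < length p \<Longrightarrow> p ! Suc (pos p x) = hd R"
    unfolding ip by (cases R) (auto simp: pLR nth_append)
  have lenR: "Suc (pos p x) < length p \<longleftrightarrow> R \<noteq> []" by (subst ip) (simp add: pLR)
  show ?thesis
  proof (cases "double_ascent p x")
    case True
    have "L = [] \<or> last L < x" using True lastL unfolding double_ascent_def Let_def ip
      by (cases "L = []") auto
    then have ph: "phi x p = L @ takeWhile (\<lambda>y. x < y) R @ x # dropWhile (\<lambda>y. x < y) R"
      unfolding pLR using phi_DA xL by blast
    define B where "B = takeWhile (\<lambda>y. x < y) R"
    define C where "C = dropWhile (\<lambda>y. x < y) R"
    have R: "R = B @ C" unfolding B_def C_def by simp
    have d: "distinct (L @ x # B @ C)" using dp pLR R by simp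
    have Bx: "\<forall>b\<in>set B. x < b" unfolding B_def by (auto dest: set_takeWhileD)
    have hC: "C \<noteq> [] \<longrightarrow> hd C < x"
    proof
      assume "C \<noteq> []"
      then have "\<not> x < hd C" unfolding C_def using hd_dropWhile by metis
      moreover have "hd C \<in> set R" using \<open>C \<noteq> []\<close> R by auto
      ultimately show "hd C < x" using xL by (metis linorder_neqE_nat)
    qed
    have "\<not> bad (L @ B @ x # C)" using swap1[OF d Bx hC] nb pLR R by auto
    moreover have "set (L @ B @ x # C) = set p" "distinct (L @ B @ x # C)" using pLR R d by auto
    ultimately show ?thesis using ph sp True unfolding phi'_def av_iff B_def C_def by auto
  next
    case False
    show ?thesis
    proof (cases "double_descent p x")
      case False2: False
      then show ?thesis using False p unfolding phi'_def by auto
    next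
      case True
      have "R = [] \<or> hd R < x" using True hdR lenR unfolding double_descent_def Let_def
        by (cases "R = []") auto
      then have ph: "phi x p = rev (dropWhile (\<lambda>y. x < y) (rev L)) @ x # rev (takeWhile (\<lambda>y. x < y) (rev L)) @ R"
        unfolding pLR using phi_DD xL by blast
      define A where "A = rev (dropWhile (\<lambda>y. x < y) (rev L))"
      define B where "B = rev (takeWhile (\<lambda>y. x < y) (rev L))"
      have L: "L = A @ B" unfolding A_def B_def by (metis rev_append rev_rev_ident takeWhile_dropWhile_id)
      have d: "distinct (A @ x # B @ R)" using dp pLR L by auto
      have Bx: "\<forall>b\<in>set B. x < b" unfolding B_def by (auto dest: set_takeWhileD)
      have lA: "A \<noteq> [] \<longrightarrow> last A < x"
      proof
        assume "A \<noteq> []"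
        then have ne: "dropWhile (\<lambda>y. x < y) (rev L) \<noteq> []" unfolding A_def by auto
        then have "\<not> x < hd (dropWhile (\<lambda>y. x < y) (rev L))" using hd_dropWhile by metis
        moreover have "last A = hd (dropWhile (\<lambda>y. x < y) (rev L))" unfolding A_def using ne
          by (simp add: last_rev)
        moreover have "last A \<in> set L" using \<open>A \<noteq> []\<close> L by auto
        ultimately show "last A < x" using xL by (metis linorder_neqE_nat)
      qed
      have "\<not> bad (A @ x # B @ R)" using swap2[OF d Bx lA] nb pLR L by auto
      moreover have "set (A @ x # B @ R) = set p" "distinct (A @ x # B @ R)" using pLR L d by auto
      ultimately show ?thesis using ph sp True False unfolding phi'_def av_iff A_def B_def by auto
    qed
  qed
qed

theorem lemma4p8:
  fixes n :: nat and p :: "nat list" and S :: "nat set"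
  assumes "n \<ge> 1"
    and "p \<in> Av_2413_4213 n"
    and "S \<subseteq> {1..n}"
  shows "phi'_set S p \<in> Av_2413_4213 n"
proof -
  have fin: "finite S" using assms(3) finite_subset by blast
  have sub: "set (sorted_list_of_set S) \<subseteq> {1..n}" using assms(3) fin by simp
  have "\<And>q. q \<in> Av_2413_4213 n \<Longrightarrow> set xs \<subseteq> {1..n} \<Longrightarrow> fold phi' xs q \<in> Av_2413_4213 n" for xs
    by (induction xs arbitrary: q) (simp_all add: phi'_pres)
  then show ?thesis unfolding phi'_set_def using assms(2) sub by blast
qed

end
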